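(* Let $f(y_1,y_2,y_3)$ be any real ternary cubic form. Let $G$ be the $3\times3$ matrix with entries $$G_{ij}=\frac{\partial f}{\partial y_i}\frac{\partial f}{\partial y_j}-f\,\frac{\partial^2 f}{\partial y_i\partial y_j}$$ (which equals $-f^2\partial^2(\log f)/\partial y_i\partial y_j$ where $f\neq0$). Let $H=\det(\partial^2 f/\partial y_i\partial y_j)$ be the Hessian determinant of $f$. Then, as an identity of polynomials in $y$, $$\det G=\tfrac12 f^3H.$$ *)

theory Defs
  imports "HOL-Analysis.Analysis"
begin

definition cubic_form :: "(nat \<Rightarrow> nat \<Rightarrow> nat \<Rightarrow> real) \<Rightarrow> real^3 \<Rightarrow> real" where
  "cubic_form c y =
     (\<Sum>(a, b, d) \<in> {(a, b, d). a + b + d = (3::nat)}.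
        c a b d * (y $ 1) ^ a * (y $ 2) ^ b * (y $ 3) ^ d)"

definition partial :: "3 \<Rightarrow> (real^3 \<Rightarrow> real) \<Rightarrow> real^3 \<Rightarrow> real" where
  "partial i g y = deriv (\<lambda>t. g (y + t *\<^sub>R axis i 1)) 0"

definition hessian_matrix :: "(real^3 \<Rightarrow> real) \<Rightarrow> real^3 \<Rightarrow> real^3^3" where
  "hessian_matrix g y = (\<chi> i j. partial i (partial j g) y)"

end

theory Submission imports Defs begin
definition M :: "(3 \<Rightarrow> nat) \<Rightarrow> real^3 \<Rightarrow> real" where "M e z = (\<Prod>k\<in>UNIV. z$k ^ e k)"

lemma M_split: "M e z = z$i ^ e i * (\<Prod>k\<in>UNIV-{i}. z$k ^ e k)"
  unfolding M_def by (simp add: prod.remove)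

lemma M_deriv: "((\<lambda>t. M e (y + t *\<^sub>R axis i 1)) has_field_derivative real (e i) * M (e(i := e i - 1)) y) (at 0)"
proof -
  have r: "(\<Prod>k\<in>UNIV-{i}. (y + t *\<^sub>R axis i 1)$k ^ e k) = (\<Prod>k\<in>UNIV-{i}. y$k ^ e k)" for t
    by (rule prod.cong) (auto simp: axis_def)
  have r2: "(\<Prod>k\<in>UNIV-{i}. y$k ^ (e(i := e i - 1)) k) = (\<Prod>k\<in>UNIV-{i}. y$k ^ e k)"
    by (rule prod.cong) auto
  have eq: "(\<lambda>t. M e (y + t *\<^sub>R axis i 1)) = (\<lambda>t. (y$i + t) ^ e i * (\<Prod>k\<in>UNIV-{i}. y$k ^ e k))"
    by (rule ext) (subst M_split[of _ _ i], simp add: r axis_def)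
  show ?thesis unfolding eq
    apply (subst M_split[of _ _ i])
    apply (auto intro!: derivative_eq_intros simp: r2)
    done
qed

lemma partial_sum:
  assumes "finite T"
  shows "partial i (\<lambda>z. \<Sum>x\<in>T. w x * M (e x) z) y = (\<Sum>x\<in>T. w x * real (e x i) * M ((e x)(i := e x i - 1)) y)"
proof -
  have "((\<lambda>t. \<Sum>x\<in>T. w x * M (e x) (y + t *\<^sub>R axis i 1)) has_field_derivative
      (\<Sum>x\<in>T. w x * (real (e x i) * M ((e x)(i := e x i - 1)) y))) (at 0)"
    by (intro DERIV_sum DERIV_cmult M_deriv)
  then show ?thesis unfolding partial_def by (rule DERIV_imp_deriv[THEN trans]) (simp add: mult_ac)
qed

lemma M_euler: "z$i * (real (e i) * M (e(i := e i - 1)) z) = real (e i) * M e z"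
proof (cases "e i = 0")
  case False
  have r2: "(\<Prod>k\<in>UNIV-{i}. z$k ^ (e(i := e i - 1)) k) = (\<Prod>k\<in>UNIV-{i}. z$k ^ e k)"
    by (rule prod.cong) auto
  have "z$i ^ e i = z$i * z$i ^ (e i - 1)" using False by (metis Suc_pred' neq0_conv power_Suc)
  then show ?thesis by (subst (1 2) M_split[of _ _ i]) (simp add: r2)
qed simp

lemma euler_sum:
  "(\<Sum>i\<in>UNIV. z$i * (\<Sum>x\<in>T. w x * real (e x i) * M ((e x)(i := e x i - 1)) z))
   = (\<Sum>x\<in>T. w x * real (\<Sum>i\<in>UNIV. e x i) * M (e x) z)"
proof -
  have "(\<Sum>i\<in>UNIV. z$i * (\<Sum>x\<in>T. w x * real (e x i) * M ((e x)(i := e x i - 1)) z))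
    = (\<Sum>i\<in>UNIV. \<Sum>x\<in>T. w x * (z$i * (real (e x i) * M ((e x)(i := e x i - 1)) z)))"
    by (simp add: sum_distrib_left mult_ac)
  also have "\<dots> = (\<Sum>i\<in>UNIV. \<Sum>x\<in>T. w x * real (e x i) * M (e x) z)"
    by (simp only: M_euler) (simp add: mult_ac)
  also have "\<dots> = (\<Sum>x\<in>T. w x * real (\<Sum>i\<in>UNIV. e x i) * M (e x) z)"
    by (subst sum.swap) (simp add: sum_distrib_left sum_distrib_right)
  finally show ?thesis .
qed
lemma alg:
  fixes h11 h12 h13 h21 h22 h23 h31 h32 h33 g1 g2 g3 y1 y2 y3 F :: real
  assumes e1: "y1*h11 + y2*h21 + y3*h31 = 2*g1"
      and e2: "y1*h12 + y2*h22 + y3*h32 = 2*g2"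
      and e3: "y1*h13 + y2*h23 + y3*h33 = 2*g3"
      and e0: "y1*g1 + y2*g2 + y3*g3 = 3*F"
  shows "(g1*g1 - F*h11)*(g2*g2 - F*h22)*(g3*g3-F*h33) + (g1*g2 - F*h12)*(g2*g3-F*h23)*(g3*g1-F*h31)
   + (g1*g3-F*h13)*(g2*g1-F*h21)*(g3*g2-F*h32) - (g1*g1 - F*h11)*(g2*g3-F*h23)*(g3*g2-F*h32)
   - (g1*g2 - F*h12)*(g2*g1-F*h21)*(g3*g3-F*h33) - (g1*g3-F*h13)*(g2*g2 - F*h22)*(g3*g1-F*h31)
   = 1/2 * F^3 * (h11*h22*h33 + h12*h23*h31 + h13*h21*h32 - h11*h23*h32 - h12*h21*h33 - h13*h22*h31)"
proof -
  define D where "D = h11*h22*h33 + h12*h23*h31 + h13*h21*h32 - h11*h23*h32 - h12*h21*h33 - h13*h22*h31"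
  define a11 where "a11 = h22*h33 - h23*h32"
  define a12 where "a12 = h13*h32 - h12*h33"
  define a13 where "a13 = h12*h23 - h13*h22"
  define a21 where "a21 = h23*h31 - h21*h33"
  define a22 where "a22 = h11*h33 - h13*h31"
  define a23 where "a23 = h13*h21 - h11*h23"
  define a31 where "a31 = h21*h32 - h22*h31"
  define a32 where "a32 = h12*h31 - h11*h32"
  define a33 where "a33 = h11*h22 - h12*h21"
  define Q where "Q = g1*(a11*g1+a12*g2+a13*g3) + g2*(a21*g1+a22*g2+a23*g3) + g3*(a31*g1+a32*g2+a33*g3)"
  have L: "(g1*g1 - F*h11)*(g2*g2 - F*h22)*(g3*g3-F*h33) + (g1*g2 - F*h12)*(g2*g3-F*h23)*(g3*g1-F*h31)
   + (g1*g3-F*h13)*(g2*g1-F*h21)*(g3*g2-F*h32) - (g1*g1 - F*h11)*(g2*g3-F*h23)*(g3*g2-F*h32)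
   - (g1*g2 - F*h12)*(g2*g1-F*h21)*(g3*g3-F*h33) - (g1*g3-F*h13)*(g2*g2 - F*h22)*(g3*g1-F*h31)
   = F^2 * Q - F^3 * D"
    unfolding D_def Q_def a11_def a12_def a13_def a21_def a22_def a23_def a31_def a32_def a33_def
    by (simp add: algebra_simps power3_eq_cube power2_eq_square)
  have c1: "(y1*h11 + y2*h21 + y3*h31)*a11 + (y1*h12 + y2*h22 + y3*h32)*a21 + (y1*h13 + y2*h23 + y3*h33)*a31 = y1*D"
    unfolding D_def a11_def a21_def a31_def by (simp add: algebra_simps)
  have c2: "(y1*h11 + y2*h21 + y3*h31)*a12 + (y1*h12 + y2*h22 + y3*h32)*a22 + (y1*h13 + y2*h23 + y3*h33)*a32 = y2*D"
    unfolding D_def a12_def a22_def a32_def by (simp add: algebra_simps)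
  have c3: "(y1*h11 + y2*h21 + y3*h31)*a13 + (y1*h12 + y2*h22 + y3*h32)*a23 + (y1*h13 + y2*h23 + y3*h33)*a33 = y3*D"
    unfolding D_def a13_def a23_def a33_def by (simp add: algebra_simps)
  have "2*Q = (y1*h11 + y2*h21 + y3*h31)*(a11*g1+a12*g2+a13*g3) + (y1*h12 + y2*h22 + y3*h32)*(a21*g1+a22*g2+a23*g3) + (y1*h13 + y2*h23 + y3*h33)*(a31*g1+a32*g2+a33*g3)"
    unfolding Q_def e1 e2 e3 by (simp add: algebra_simps)
  also have "\<dots> = g1*((y1*h11 + y2*h21 + y3*h31)*a11 + (y1*h12 + y2*h22 + y3*h32)*a21 + (y1*h13 + y2*h23 + y3*h33)*a31)
     + g2*((y1*h11 + y2*h21 + y3*h31)*a12 + (y1*h12 + y2*h22 + y3*h32)*a22 + (y1*h13 + y2*h23 + y3*h33)*a32)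
     + g3*((y1*h11 + y2*h21 + y3*h31)*a13 + (y1*h12 + y2*h22 + y3*h32)*a23 + (y1*h13 + y2*h23 + y3*h33)*a33)"
    by (simp add: algebra_simps)
  also have "\<dots> = D * (y1*g1 + y2*g2 + y3*g3)" unfolding c1 c2 c3 by (simp add: algebra_simps)
  finally have "2*Q = D * (3*F)" unfolding e0 .
  hence "Q = 3/2 * F * D" by (simp add: mult_ac)
  then show ?thesis unfolding L D_def[symmetric] by (simp add: algebra_simps power3_eq_cube power2_eq_square)
qed

definition ex :: "nat \<times> nat \<times> nat \<Rightarrow> 3 \<Rightarrow> nat" where
  "ex x = (\<lambda>k. if k = 1 then fst x else if k = 2 then fst (snd x) else snd (snd x))"

lemma ex_simps[simp]: "ex (a,b,d) 1 = a" "ex (a,b,d) 2 = b" "ex (a,b,d) 3 = d"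
  by (auto simp: ex_def)

lemma M_ex: "M (ex (a,b,d)) y = (y $ 1) ^ a * (y $ 2) ^ b * (y $ 3) ^ d"
  unfolding M_def UNIV_3 by simp

lemma sum_ex: "(\<Sum>i\<in>UNIV. ex (a,b,d) i) = a + b + d"
  by (simp add: sum_3)

lemma finT: "finite {(a, b, d). a + b + d = (3::nat)}"
proof -
  have "{(a, b, d). a + b + d = (3::nat)} \<subseteq> {..3} \<times> {..3} \<times> {..3}" by auto
  then show ?thesis by (rule finite_subset) auto
qed

lemma cf: "cubic_form c = (\<lambda>z. \<Sum>x\<in>{(a, b, d). a + b + d = (3::nat)}. (case x of (a,b,d) \<Rightarrow> c a b d) * M (ex x) z)"
  unfolding cubic_form_def by (rule ext, rule sum.cong) (auto simp: M_ex)


theorem lemma3p5: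
  fixes c :: "nat \<Rightarrow> nat \<Rightarrow> nat \<Rightarrow> real" and y :: "real^3"
  defines "f \<equiv> cubic_form c"
  defines "G \<equiv> (\<chi> i j. partial i f y * partial j f y - f y * partial i (partial j f) y) :: real^3^3"
  shows "det G = 1/2 * (f y) ^ 3 * det (hessian_matrix f y)"
proof -
  define T where "T = {(a, b, d). a + b + d = (3::nat)}"
  define w where "w = (\<lambda>x. case x of (a,b,d) \<Rightarrow> c a b d)"
  have fT: "finite T" unfolding T_def by (rule finT)
  have fe: "f = (\<lambda>z. \<Sum>x\<in>T. w x * M (ex x) z)" unfolding f_def cf T_def w_def ..
  have d1: "partial j f = (\<lambda>z. \<Sum>x\<in>T. (w x * real (ex x j)) * M ((ex x)(j := ex x j - 1)) z)" for j
    unfolding fe by (rule ext, subst partial_sum[OF fT]) simp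
  have d2: "partial i (partial j f) y = (\<Sum>x\<in>T. (w x * real (ex x j)) * real (((ex x)(j := ex x j - 1)) i)
       * M (((ex x)(j := ex x j - 1))(i := ((ex x)(j := ex x j - 1)) i - 1)) y)" for i j
    unfolding d1 by (rule partial_sum[OF fT])
  have E0: "(\<Sum>i\<in>UNIV. y$i * partial i f y) = 3 * f y"
  proof -
    have "(\<Sum>i\<in>UNIV. y$i * partial i f y) = (\<Sum>x\<in>T. w x * real (\<Sum>i\<in>UNIV. ex x i) * M (ex x) y)"
      unfolding d1 by (rule euler_sum)
    also have "\<dots> = (\<Sum>x\<in>T. 3 * (w x * M (ex x) y))"
      by (rule sum.cong) (auto simp: T_def sum_3)
    finally show ?thesis unfolding fe by (simp add: sum_distrib_left)
  qed
  have E1: "(\<Sum>i\<in>UNIV. y$i * partial i (partial j f) y) = 2 * partial j f y" for j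
  proof -
    have "(\<Sum>i\<in>UNIV. y$i * partial i (partial j f) y) =
      (\<Sum>x\<in>T. (w x * real (ex x j)) * real (\<Sum>i\<in>UNIV. ((ex x)(j := ex x j - 1)) i) * M ((ex x)(j := ex x j - 1)) y)"
      unfolding d2 by (rule euler_sum)
    also have "\<dots> = (\<Sum>x\<in>T. 2 * ((w x * real (ex x j)) * M ((ex x)(j := ex x j - 1)) y))"
    proof (rule sum.cong)
      fix x assume "x \<in> T"
      then obtain a b d where x: "x = (a,b,d)" and s: "a + b + d = 3" unfolding T_def by auto
      show "(w x * real (ex x j)) * real (\<Sum>i\<in>UNIV. ((ex x)(j := ex x j - 1)) i) * M ((ex x)(j := ex x j - 1)) y
         = 2 * ((w x * real (ex x j)) * M ((ex x)(j := ex x j - 1)) y)"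
      proof (cases "ex x j = 0")
        case False
        have "(\<Sum>i\<in>UNIV. ((ex x)(j := ex x j - 1)) i) = 2"
          using False s exhaust_3[of j] unfolding x by (auto simp: sum_3)
        then show ?thesis by simp
      qed simp
    qed simp
    finally show ?thesis unfolding d1 by (simp add: sum_distrib_left)
  qed
  show ?thesis
    unfolding G_def hessian_matrix_def det_3
    unfolding vec_lambda_beta
    apply (rule alg)
    using E0 E1[of 1] E1[of 2] E1[of 3] by (simp_all add: sum_3 mult_ac)
qed

end
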